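(* Let $X$ be an $n$-dimensional polyhedral normed space and let $2 \leq k \leq n-1$. Let $Y \subseteq X$ be a $k$-dimensional subspace such that every projection in $\mathcal{P}_{\min}(X, Y)$ has at most $m$ different norming pairs, where $m$ is a fixed positive integer. Then there exists $r>0$ such that for every $k$-dimensional subspace $Y_0 \subseteq X$ with $d(Y, Y_0) \leq r$, every projection in $\mathcal{P}_{\min}(X, Y_0)$ has at most $m$ different norming pairs.
   Context: A normed space $X=(\mathbb{R}^n,\|\cdot\|)$ is polyhedral if its unit ball is a convex polytope. A projection onto $Y$ is a linear $P:X\to Y$ with $P|_Y=\mathrm{id}_Y$; $\lambda(Y,X)$ is the infimum of their operator norms and $\mathcal{P}_{\min}(X,Y)$ the set of projections of norm $\lambda(Y,X)$. A norming pair for a projection $P$ is a pair $(x,f)\in \mathrm{ext}\,B_X\times \mathrm{ext}\,B_{X^*}$ (extreme points of the unit balls of $X$ and $X^*$) with $f(P(x))=\|P\|$. For $k$-dimensional subspaces $Y,Z$, $d(Y,Z)$ is the Hausdorff distance between the unit spheres of $Y$ and $Z$. *)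

theory Defs
  imports "HOL-Analysis.Analysis"
begin

definition is_norm :: "(real^'n \<Rightarrow> real) \<Rightarrow> bool" where
  "is_norm N \<longleftrightarrow> (\<forall>x. 0 \<le> N x) \<and> (\<forall>x. N x = 0 \<longleftrightarrow> x = 0)
     \<and> (\<forall>c x. N (c *\<^sub>R x) = \<bar>c\<bar> * N x) \<and> (\<forall>x y. N (x + y) \<le> N x + N y)"

definition unit_ball :: "(real^'n \<Rightarrow> real) \<Rightarrow> (real^'n) set" where
  "unit_ball N = {x. N x \<le> 1}"

definition polyhedral_norm :: "(real^'n \<Rightarrow> real) \<Rightarrow> bool" where
  "polyhedral_norm N \<longleftrightarrow> is_norm N \<and> polytope (unit_ball N)"

text \<open>Dual unit ball; functionals f on real^'n are represented by vectors u, f x = u \<bullet> x.\<close>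
definition dual_unit_ball :: "(real^'n \<Rightarrow> real) \<Rightarrow> (real^'n) set" where
  "dual_unit_ball N = {u. \<forall>x. N x \<le> 1 \<longrightarrow> \<bar>u \<bullet> x\<bar> \<le> 1}"

definition op_norm :: "(real^'n \<Rightarrow> real) \<Rightarrow> (real^'n \<Rightarrow> real^'n) \<Rightarrow> real" where
  "op_norm N P = Sup ((\<lambda>x. N (P x)) ` unit_ball N)"

definition is_projection :: "(real^'n) set \<Rightarrow> (real^'n \<Rightarrow> real^'n) \<Rightarrow> bool" where
  "is_projection Y P \<longleftrightarrow> linear P \<and> (\<forall>x. P x \<in> Y) \<and> (\<forall>y\<in>Y. P y = y)"

definition rel_proj_const :: "(real^'n \<Rightarrow> real) \<Rightarrow> (real^'n) set \<Rightarrow> real" where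
  "rel_proj_const N Y = Inf (op_norm N ` {P. is_projection Y P})"

definition min_projections :: "(real^'n \<Rightarrow> real) \<Rightarrow> (real^'n) set \<Rightarrow> (real^'n \<Rightarrow> real^'n) set" where
  "min_projections N Y = {P. is_projection Y P \<and> op_norm N P = rel_proj_const N Y}"

definition norming_pairs :: "(real^'n \<Rightarrow> real) \<Rightarrow> (real^'n \<Rightarrow> real^'n) \<Rightarrow> ((real^'n) \<times> (real^'n)) set" where
  "norming_pairs N P = {(x, u). (x extreme_point_of (unit_ball N)) \<and> (u extreme_point_of (dual_unit_ball N))
                                \<and> u \<bullet> P x = op_norm N P}"

definition unit_sphere_in :: "(real^'n \<Rightarrow> real) \<Rightarrow> (real^'n) set \<Rightarrow> (real^'n) set" where
  "unit_sphere_in N Y = {y \<in> Y. N y = 1}"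

definition subspace_dist :: "(real^'n \<Rightarrow> real) \<Rightarrow> (real^'n) set \<Rightarrow> (real^'n) set \<Rightarrow> real" where
  "subspace_dist N Y Z =
     max (SUP a\<in>unit_sphere_in N Y. INF b\<in>unit_sphere_in N Z. N (a - b))
         (SUP b\<in>unit_sphere_in N Z. INF a\<in>unit_sphere_in N Y. N (a - b))"

end

theory Submission
  imports Defs
begin

context
  fixes N :: "real^'n \<Rightarrow> real"
  assumes pn: "polyhedral_norm N"
begin

lemma isn: "is_norm N" using pn unfolding polyhedral_norm_def by auto

lemma N_nonneg: "0 \<le> N x" using isn unfolding is_norm_def by auto
lemma N_zero_iff: "N x = 0 \<longleftrightarrow> x = 0" using isn unfolding is_norm_def by auto
lemma N_zero[simp]: "N 0 = 0" using N_zero_iff by auto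
lemma N_scale: "N (c *\<^sub>R x) = \<bar>c\<bar> * N x" using isn unfolding is_norm_def by auto
lemma N_tri: "N (x + y) \<le> N x + N y" using isn unfolding is_norm_def by auto
lemma N_minus: "N (- x) = N x" using N_scale[of "-1" x] by simp
lemma N_diff_sym: "N (x - y) = N (y - x)" using N_minus[of "x - y"] by simp
lemma N_tri_diff: "N (x - z) \<le> N (x - y) + N (y - z)"
  using N_tri[of "x - y" "y - z"] by simp
lemma N_rev: "\<bar>N x - N y\<bar> \<le> N (x - y)"
proof -
  have "N x \<le> N (x - y) + N y" using N_tri[of "x-y" y] by simp
  moreover have "N y \<le> N (x - y) + N x" using N_tri[of "y-x" x] N_diff_sym[of x y] by simp
  ultimately show ?thesis by linarith
qed
lemma N_pos: "x \<noteq> 0 \<Longrightarrow> 0 < N x" using N_nonneg N_zero_iff by (metis less_eq_real_def)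

lemma N_sum: "finite I \<Longrightarrow> N (sum f I) \<le> (\<Sum>i\<in>I. N (f i))"
proof (induction I rule: finite_induct)
  case empty then show ?case by simp
next
  case (insert a I) then show ?case using N_tri[of "f a" "sum f I"] by simp
qed

lemma N_upper: "\<exists>C>0. \<forall>x. N x \<le> C * norm x"
proof -
  define C where "C = 1 + (\<Sum>i\<in>UNIV. N (axis i (1::real)))"
  have C0: "C > 0" unfolding C_def using N_nonneg by (simp add: add_pos_nonneg sum_nonneg)
  have "N x \<le> C * norm x" for x
  proof -
    have "N x = N (\<Sum>i\<in>UNIV. x$i *\<^sub>R axis i 1)"
      using basis_expansion[of x] by (simp add: scalar_mult_eq_scaleR)
    also have "\<dots> \<le> (\<Sum>i\<in>UNIV. N (x$i *\<^sub>R axis i 1))" by (rule N_sum) simp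
    also have "\<dots> = (\<Sum>i\<in>UNIV. \<bar>x$i\<bar> * N (axis i 1))" by (simp add: N_scale)
    also have "\<dots> \<le> (\<Sum>i\<in>UNIV. norm x * N (axis i 1))"
      by (rule sum_mono, rule mult_right_mono) (auto simp: component_le_norm_cart N_nonneg)
    also have "\<dots> \<le> C * norm x" unfolding C_def sum_distrib_left[symmetric]
      by (simp add: algebra_simps)
    finally show ?thesis .
  qed
  with C0 show ?thesis by blast
qed

lemma ball_compact: "compact (unit_ball N)"
  using pn unfolding polyhedral_norm_def by (simp add: polytope_imp_compact)

lemma N_lower: "\<exists>K>0. \<forall>x. norm x \<le> K * N x"
proof -
  obtain K where K: "K > 0" "\<And>x. x \<in> unit_ball N \<Longrightarrow> norm x \<le> K"
    using compact_imp_bounded[OF ball_compact] bounded_pos by blast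
  have "norm x \<le> K * N x" for x
  proof (cases "x = 0")
    case True then show ?thesis by simp
  next
    case False
    then have p: "N x > 0" by (rule N_pos)
    have "(1 / N x) *\<^sub>R x \<in> unit_ball N" unfolding unit_ball_def using p by (simp add: N_scale)
    then have "norm ((1 / N x) *\<^sub>R x) \<le> K" by (rule K(2))
    then have "norm x / N x \<le> K" using p by simp
    then show ?thesis using p by (simp add: divide_le_eq mult.commute)
  qed
  with K show ?thesis by blast
qed

lemma N_tendsto: assumes "(f \<longlongrightarrow> l) F" shows "((\<lambda>j. N (f j)) \<longlongrightarrow> N l) F"
proof -
  obtain C where C: "C > 0" "\<And>x. N x \<le> C * norm x" using N_upper by blast
  have "((\<lambda>j. C *\<^sub>R f j) \<longlongrightarrow> C *\<^sub>R l) F" by (intro tendsto_intros assms)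
  moreover have "eventually (\<lambda>j. dist (N (f j)) (N l) \<le> dist (C *\<^sub>R f j) (C *\<^sub>R l)) F"
  proof (intro always_eventually allI)
    fix j
    have "dist (N (f j)) (N l) \<le> N (f j - l)" using N_rev by (simp add: dist_real_def)
    also have "\<dots> \<le> C * norm (f j - l)" by (rule C)
    also have "\<dots> = dist (C *\<^sub>R f j) (C *\<^sub>R l)" using C(1)
      by (simp add: dist_norm scaleR_diff_right[symmetric])
    finally show "dist (N (f j)) (N l) \<le> dist (C *\<^sub>R f j) (C *\<^sub>R l)" .
  qed
  ultimately show ?thesis by (rule metric_tendsto_imp_tendsto)
qed

lemma N_tendsto_zero_imp: assumes "((\<lambda>j. N (f j - l)) \<longlongrightarrow> 0) F" shows "(f \<longlongrightarrow> l) F"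
proof -
  obtain K where K: "K > 0" "\<And>x. norm x \<le> K * N x" using N_lower by blast
  have "((\<lambda>j. K * N (f j - l)) \<longlongrightarrow> K * 0) F" by (intro tendsto_intros assms)
  then have t: "((\<lambda>j. K * N (f j - l)) \<longlongrightarrow> 0) F" by simp
  show ?thesis
  proof (rule metric_tendsto_imp_tendsto[OF t])
    show "\<forall>\<^sub>F x in F. dist (f x) l \<le> dist (K * N (f x - l)) 0"
      using K N_nonneg by (simp add: dist_norm)
  qed
qed


lemma zero_in_ball: "0 \<in> unit_ball N" unfolding unit_ball_def by simp

lemma linear_N_bound: assumes "linear P" shows "\<exists>B\<ge>0. \<forall>x. N (P x) \<le> B * N x"
proof -
  obtain C where C: "C > 0" "\<And>x. N x \<le> C * norm x" using N_upper by blast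
  obtain K where K: "K > 0" "\<And>x. norm x \<le> K * N x" using N_lower by blast
  obtain B where B: "B > 0" "\<And>x. norm (P x) \<le> B * norm x" using linear_bounded_pos[OF assms] by blast
  have "N (P x) \<le> (C * B * K) * N x" for x
  proof -
    have "N (P x) \<le> C * norm (P x)" by (rule C)
    also have "\<dots> \<le> C * (B * norm x)" using C(1) B(2) by (simp add: mult_left_mono)
    also have "\<dots> \<le> C * (B * (K * N x))" using C(1) B(1) K(2)[of x] by (simp add: mult_left_mono)
    finally show ?thesis by (simp add: algebra_simps)
  qed
  moreover have "C * B * K \<ge> 0" using C B K by simp
  ultimately show ?thesis by blast
qed

lemma op_bdd: assumes "linear P" shows "bdd_above ((\<lambda>x. N (P x)) ` unit_ball N)"
proof -
  obtain B where B: "B \<ge> 0" "\<And>x. N (P x) \<le> B * N x" using linear_N_bound[OF assms] by blast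
  have "N (P x) \<le> B" if "x \<in> unit_ball N" for x
  proof -
    have "N (P x) \<le> B * N x" by (rule B)
    also have "\<dots> \<le> B * 1" using that B(1) unfolding unit_ball_def by (intro mult_left_mono) auto
    finally show ?thesis by simp
  qed
  then show ?thesis by (rule bdd_aboveI2[where M=B])
qed

lemma op_ball: "linear P \<Longrightarrow> x \<in> unit_ball N \<Longrightarrow> N (P x) \<le> op_norm N P"
  unfolding op_norm_def by (rule cSUP_upper) (auto intro: op_bdd)

lemma op_nonneg: "linear P \<Longrightarrow> 0 \<le> op_norm N P"
proof -
  assume l: "linear P"
  have "N (P 0) \<le> op_norm N P" by (rule op_ball[OF l zero_in_ball])
  then show ?thesis using N_nonneg[of "P 0"] by linarith
qed

lemma op_upper: assumes "linear P" shows "N (P x) \<le> op_norm N P * N x"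
proof (cases "x = 0")
  case True then have "P x = 0" using assms linear_0 by blast
  then show ?thesis using True by simp
next
  case False
  then have p: "N x > 0" by (rule N_pos)
  have "(1 / N x) *\<^sub>R x \<in> unit_ball N" unfolding unit_ball_def using p by (simp add: N_scale)
  then have "N (P ((1 / N x) *\<^sub>R x)) \<le> op_norm N P" by (rule op_ball[OF assms])
  then have "N (P x) / N x \<le> op_norm N P" using p assms
    by (simp add: linear_scale N_scale)
  then show ?thesis using p by (simp add: divide_le_eq)
qed

lemma op_least: "(\<And>x. x \<in> unit_ball N \<Longrightarrow> N (P x) \<le> c) \<Longrightarrow> op_norm N P \<le> c"
  unfolding op_norm_def by (rule cSUP_least) (use zero_in_ball in auto)

lemma op_least2: assumes "\<And>x. N (P x) \<le> c * N x" "c \<ge> 0" shows "op_norm N P \<le> c"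
proof (rule op_least)
  fix x assume "x \<in> unit_ball N"
  then have "N x \<le> 1" unfolding unit_ball_def by simp
  then have "c * N x \<le> c" using assms(2) by (simp add: mult_left_le)
  then show "N (P x) \<le> c" using assms(1)[of x] by linarith
qed

lemma op_exists: assumes "linear P" "c < op_norm N P" shows "\<exists>x\<in>unit_ball N. c < N (P x)"
proof -
  have "c < Sup ((\<lambda>x. N (P x)) ` unit_ball N)" using assms(2) unfolding op_norm_def .
  moreover have "(\<lambda>x. N (P x)) ` unit_ball N \<noteq> {}" using zero_in_ball by blast
  ultimately show ?thesis using less_cSupD[of "(\<lambda>x. N (P x)) ` unit_ball N" c] by blast
qed

lemma lam_lower: "is_projection Y P \<Longrightarrow> rel_proj_const N Y \<le> op_norm N P"
  unfolding rel_proj_const_def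
  by (rule cInf_lower) (auto intro!: bdd_belowI[where m=0] op_nonneg simp: is_projection_def)

lemma lam_greatest: "\<exists>P. is_projection Y P \<Longrightarrow> (\<And>P. is_projection Y P \<Longrightarrow> c \<le> op_norm N P)
   \<Longrightarrow> c \<le> rel_proj_const N Y"
  unfolding rel_proj_const_def by (rule cInf_greatest) auto

lemma E_finite: "finite {x. x extreme_point_of unit_ball N}"
proof -
  obtain S where S: "finite S" "unit_ball N = convex hull S"
    using pn unfolding polyhedral_norm_def polytope_def by blast
  have "{x. x extreme_point_of unit_ball N} \<subseteq> S" using S(2) extreme_point_of_convex_hull by auto
  then show ?thesis using S(1) by (rule finite_subset)
qed

lemma dual_le: "u \<in> dual_unit_ball N \<Longrightarrow> u \<bullet> y \<le> N y"
proof (cases "y = 0")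
  case True then show ?thesis by simp
next
  case False
  assume u: "u \<in> dual_unit_ball N"
  then have p: "N y > 0" using False by (rule_tac N_pos)
  have "N ((1 / N y) *\<^sub>R y) \<le> 1" using p by (simp add: N_scale)
  then have "\<bar>u \<bullet> ((1 / N y) *\<^sub>R y)\<bar> \<le> 1" using u unfolding dual_unit_ball_def by blast
  then have "u \<bullet> y / N y \<le> 1" using p by (simp add: abs_le_iff)
  then show ?thesis using p by (simp add: divide_le_eq)
qed

lemma NP_sub: "norming_pairs N P \<subseteq> {x. x extreme_point_of unit_ball N} \<times> {u. u extreme_point_of dual_unit_ball N}"
  unfolding norming_pairs_def by auto


lemma F_finite: "finite {u. u extreme_point_of dual_unit_ball N}"
proof -
  obtain S where S: "finite S" "unit_ball N = convex hull S"
    using pn unfolding polyhedral_norm_def polytope_def by blast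
  have eq: "dual_unit_ball N = (\<Inter>s\<in>S. {u. s \<bullet> u \<le> 1} \<inter> {u. (- s) \<bullet> u \<le> 1})"
  proof (intro set_eqI iffI)
    fix u assume u: "u \<in> dual_unit_ball N"
    have "s \<in> unit_ball N" if "s \<in> S" for s
    proof -
      have "s \<in> convex hull S" using hull_subset[of S convex] that by (rule subsetD)
      then show ?thesis using S(2) by simp
    qed
    then show "u \<in> (\<Inter>s\<in>S. {u. s \<bullet> u \<le> 1} \<inter> {u. (- s) \<bullet> u \<le> 1})"
      using u unfolding dual_unit_ball_def unit_ball_def by (auto simp: inner_commute abs_le_iff)
  next
    fix u assume u: "u \<in> (\<Inter>s\<in>S. {u. s \<bullet> u \<le> 1} \<inter> {u. (- s) \<bullet> u \<le> 1})"
    have cv: "convex {x. \<bar>u \<bullet> x\<bar> \<le> 1}"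
    proof -
      have "{x. \<bar>u \<bullet> x\<bar> \<le> 1} = {x. u \<bullet> x \<le> 1} \<inter> {x. (-u) \<bullet> x \<le> 1}" by (auto simp: abs_le_iff)
      then show ?thesis by (simp only: convex_Int convex_halfspace_le)
    qed
    have "S \<subseteq> {x. \<bar>u \<bullet> x\<bar> \<le> 1}" using u by (auto simp: inner_commute abs_le_iff)
    then have "convex hull S \<subseteq> {x. \<bar>u \<bullet> x\<bar> \<le> 1}" using cv by (rule hull_minimal)
    then show "u \<in> dual_unit_ball N" using S(2) unfolding dual_unit_ball_def unit_ball_def by auto
  qed
  have "polyhedron (\<Inter>s\<in>S. {u. s \<bullet> u \<le> 1} \<inter> {u. (- s) \<bullet> u \<le> 1})"
  proof (rule polyhedron_Inter)
    show "finite ((\<lambda>s. {u. s \<bullet> u \<le> 1} \<inter> {u. (- s) \<bullet> u \<le> 1}) ` S)" using S(1) by simp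
  next
    fix T assume "T \<in> (\<lambda>s. {u. s \<bullet> u \<le> 1} \<inter> {u. (- s) \<bullet> u \<le> 1}) ` S"
    then obtain s where "T = {u. s \<bullet> u \<le> 1} \<inter> {u. (- s) \<bullet> u \<le> 1}" by blast
    then show "polyhedron T" by (simp only: polyhedron_Int polyhedron_halfspace_le)
  qed
  then have "polyhedron (dual_unit_ball N)" unfolding eq .
  then show ?thesis by (rule finite_polyhedron_extreme_points)
qed



lemma nonzero_of_dim: assumes "dim (Z::(real^'n) set) > 0" shows "\<exists>v\<in>Z. v \<noteq> 0"
proof (rule ccontr)
  assume "\<not> ?thesis"
  then have "Z \<subseteq> {0}" by blast
  then have "dim Z = 0" by simp
  then show False using assms by linarith
qed

lemma approx1:
  assumes Z: "subspace Z" "\<exists>v\<in>Z. v \<noteq> 0" and Y: "subspace Y"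
    and r: "r > 0" and d: "(SUP a\<in>unit_sphere_in N Y. INF b\<in>unit_sphere_in N Z. N (a - b)) \<le> r"
  shows "\<forall>y\<in>Y. \<exists>z\<in>Z. N (y - z) \<le> 2 * r * N y"
proof
  fix y assume yY: "y \<in> Y"
  show "\<exists>z\<in>Z. N (y - z) \<le> 2 * r * N y"
  proof (cases "y = 0")
    case True then show ?thesis using subspace_0[OF Z(1)] by (intro bexI[of _ 0]) auto
  next
    case False
    then have py: "N y > 0" by (rule N_pos)
    obtain v where v: "v \<in> Z" "v \<noteq> 0" using Z(2) by blast
    then have pv: "N v > 0" by (intro N_pos)
    define b0 where "b0 = (1 / N v) *\<^sub>R v"
    have b0: "b0 \<in> unit_sphere_in N Z" unfolding b0_def unit_sphere_in_def
      using pv v subspace_scale[OF Z(1)] by (simp add: N_scale)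
    define a where "a = (1 / N y) *\<^sub>R y"
    have a: "a \<in> unit_sphere_in N Y" unfolding a_def unit_sphere_in_def
      using py yY subspace_scale[OF Y] by (simp add: N_scale)
    have bb: "bdd_below ((\<lambda>b. N (a' - b)) ` unit_sphere_in N Z)" for a'
      by (rule bdd_belowI2[where m=0]) (rule N_nonneg)
    have ub: "(INF b\<in>unit_sphere_in N Z. N (a' - b)) \<le> 2" if "a' \<in> unit_sphere_in N Y" for a'
    proof -
      have "(INF b\<in>unit_sphere_in N Z. N (a' - b)) \<le> N (a' - b0)" by (rule cINF_lower[OF bb b0])
      also have "\<dots> \<le> N a' + N (- b0)" using N_tri[of a' "- b0"] by simp
      also have "\<dots> = 2" using that b0 unfolding unit_sphere_in_def by (simp add: N_scale[of "-1", simplified])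
      finally show ?thesis .
    qed
    have ba: "bdd_above ((\<lambda>a'. INF b\<in>unit_sphere_in N Z. N (a' - b)) ` unit_sphere_in N Y)"
      by (rule bdd_aboveI2[where M=2]) (rule ub)
    have "(INF b\<in>unit_sphere_in N Z. N (a - b)) \<le> r"
      using cSUP_upper[OF a ba] d by linarith
    then have "Inf ((\<lambda>b. N (a - b)) ` unit_sphere_in N Z) < 2 * r" using r by linarith
    then obtain b where b: "b \<in> unit_sphere_in N Z" "N (a - b) < 2 * r"
      using cInf_lessD[of "(\<lambda>b. N (a - b)) ` unit_sphere_in N Z"] b0 by blast
    have "N y *\<^sub>R b \<in> Z" using b(1) subspace_scale[OF Z(1)] unfolding unit_sphere_in_def by blast
    moreover have "N (y - N y *\<^sub>R b) \<le> 2 * r * N y"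
    proof -
      have "y - N y *\<^sub>R b = N y *\<^sub>R (a - b)" unfolding a_def using py
        by (simp add: algebra_simps)
      then have "N (y - N y *\<^sub>R b) = N y * N (a - b)" using py by (simp add: N_scale)
      also have "\<dots> \<le> N y * (2 * r)" using b(2) py by (intro mult_left_mono) auto
      finally show ?thesis by (simp add: algebra_simps)
    qed
    ultimately show ?thesis by blast
  qed
qed

lemma approx_both:
  assumes Y: "subspace Y" "dim Y > 0" and Z: "subspace Z" "dim Z > 0" and r: "r > 0"
    and d: "subspace_dist N Y Z \<le> r"
  shows "\<forall>y\<in>Y. \<exists>z\<in>Z. N (y - z) \<le> 2 * r * N y" "\<forall>z\<in>Z. \<exists>y\<in>Y. N (z - y) \<le> 2 * r * N z"
proof -
  have d1: "(SUP a\<in>unit_sphere_in N Y. INF b\<in>unit_sphere_in N Z. N (a - b)) \<le> r"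
    using d unfolding subspace_dist_def by linarith
  have d2: "(SUP b\<in>unit_sphere_in N Z. INF a\<in>unit_sphere_in N Y. N (a - b)) \<le> r"
    using d unfolding subspace_dist_def by linarith
  have e: "(\<lambda>b. INF a\<in>unit_sphere_in N Y. N (a - b)) = (\<lambda>b. INF a\<in>unit_sphere_in N Y. N (b - a))"
    by (intro ext INF_cong refl) (rule N_diff_sym)
  have d2': "(SUP b\<in>unit_sphere_in N Z. INF a\<in>unit_sphere_in N Y. N (b - a)) \<le> r"
    using d2 unfolding e .
  show "\<forall>y\<in>Y. \<exists>z\<in>Z. N (y - z) \<le> 2 * r * N y"
    by (rule approx1[OF Z(1) nonzero_of_dim[OF Z(2)] Y(1) r d1])
  show "\<forall>z\<in>Z. \<exists>y\<in>Y. N (z - y) \<le> 2 * r * N z"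
    by (rule approx1[OF Y(1) nonzero_of_dim[OF Y(2)] Z(1) r d2'])
qed

lemma lam_bound:
  assumes Q: "is_projection Y Q" and Y: "subspace Y" and Z: "subspace Z" and dZ: "dim Z = dim Y"
    and A: "\<forall>z\<in>Z. \<exists>y\<in>Y. N (z - y) \<le> t * N z" and t: "t \<ge> 0"
    and small: "t * (1 + op_norm N Q) < 1"
  shows "rel_proj_const N Z \<le> op_norm N Q / (1 - t * (1 + op_norm N Q))"
proof -
  define q where "q = op_norm N Q"
  define d where "d = 1 - t * (1 + q)"
  have pQ: "linear Q" "\<And>x. Q x \<in> Y" "\<And>y. y \<in> Y \<Longrightarrow> Q y = y"
    using Q unfolding is_projection_def by auto
  note lQ = pQ(1)
  have q0: "q \<ge> 0" unfolding q_def by (rule op_nonneg[OF lQ])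
  have d0: "d > 0" using small unfolding d_def q_def by linarith
  have key: "d * N z \<le> N (Q z)" if zZ: "z \<in> Z" for z
  proof -
    obtain y where y: "y \<in> Y" "N (z - y) \<le> t * N z" by (rule bexE[OF bspec[OF A zZ]])
    have "Q y = y" using y(1) by (rule pQ(3))
    then have "Q z - y = Q (z - y)" using lQ by (simp add: linear_diff)
    moreover have "N (Q (z - y)) \<le> q * N (z - y)" unfolding q_def by (rule op_upper[OF lQ])
    ultimately have "N (Q z - y) \<le> q * N (z - y)" by simp
    also have "\<dots> \<le> q * (t * N z)" using y(2) q0 by (rule mult_left_mono)
    finally have h1: "N (Q z - y) \<le> q * (t * N z)" .
    have "N z = N ((z - Q z) + Q z)" by simp
    then have "N z \<le> N (z - y) + N (y - Q z) + N (Q z)"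
      using N_tri_diff[of z "Q z" y] N_tri[of "z - Q z" "Q z"] by linarith
    also have "N (y - Q z) = N (Q z - y)" by (rule N_diff_sym)
    finally have "N z \<le> t * N z + q * (t * N z) + N (Q z)" using h1 y(2) by linarith
    moreover have "d * N z = N z - t * N z - q * (t * N z)" unfolding d_def by (simp add: algebra_simps)
    ultimately show ?thesis by linarith
  qed
  have inj: "z1 = z2" if "z1 \<in> Z" "z2 \<in> Z" "Q z1 = Q z2" for z1 z2
  proof -
    have "z1 - z2 \<in> Z" using that Z by (simp add: subspace_diff)
    moreover have "Q (z1 - z2) = 0" using that lQ by (simp add: linear_diff)
    ultimately have "d * N (z1 - z2) \<le> 0" using key[of "z1 - z2"] by simp
    then have "N (z1 - z2) \<le> 0" using d0 by (simp add: mult_le_0_iff)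
    then have "N (z1 - z2) = 0" using N_nonneg[of "z1 - z2"] by linarith
    then show ?thesis using N_zero_iff by simp
  qed
  have "span Z = Z" using Z by simp
  then have injo: "inj_on Q (span Z)" unfolding inj_on_def using inj by blast
  have QZ: "Q ` Z \<subseteq> Y" using pQ(2) by blast
  have sQZ: "subspace (Q ` Z)" by (rule linear_subspace_image[OF lQ Z])
  have "dim (Q ` Z) = dim Z" by (rule dim_image_eq[OF lQ injo])
  then have QZY: "Q ` Z = Y" using subspace_dim_equal[OF sQZ Y QZ] dZ by simp
  define R where "R = (\<lambda>x. THE z. z \<in> Z \<and> Q z = Q x)"
  have Rch: "R x \<in> Z \<and> Q (R x) = Q x" for x
  proof -
    have "Q x \<in> Y" by (rule pQ(2))
    then obtain z where z: "z \<in> Z" "Q z = Q x" using QZY by (metis imageE)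
    have "\<exists>!z. z \<in> Z \<and> Q z = Q x" using z inj by metis
    then show ?thesis unfolding R_def by (rule theI')
  qed
  have Ru: "R x = z" if "z \<in> Z" "Q z = Q x" for x z
    using inj[of "R x" z] Rch[of x] that by simp
  have lR: "linear R"
  proof (rule linearI)
    fix x y
    show "R (x + y) = R x + R y"
      using Rch[of x] Rch[of y] Z lQ by (intro Ru) (simp_all add: subspace_add linear_add)
  next
    fix c :: real and x
    show "R (c *\<^sub>R x) = c *\<^sub>R R x"
      using Rch[of x] Z lQ by (intro Ru) (simp_all add: subspace_scale linear_scale)
  qed
  have pR: "is_projection Z R" unfolding is_projection_def using lR Rch Ru by blast
  have "N (R x) \<le> (q / d) * N x" for x
  proof -
    have "d * N (R x) \<le> N (Q (R x))" using key Rch by blast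
    also have "\<dots> = N (Q x)" using Rch by simp
    also have "\<dots> \<le> q * N x" using op_upper[OF lQ] unfolding q_def by simp
    finally have "d * N (R x) \<le> q * N x" .
    then show ?thesis using d0 by (simp add: field_simps)
  qed
  then have "op_norm N R \<le> q / d" using q0 d0 by (intro op_least2) auto
  then have "rel_proj_const N Z \<le> q / d" using lam_lower[OF pR] by linarith
  then show ?thesis unfolding q_def d_def .
qed


end

lemma proj_exists: assumes "subspace (Y::(real^'n) set)" shows "\<exists>P. is_projection Y P"
proof -
  obtain B where B: "B \<subseteq> Y" "independent B" "Y \<subseteq> span B" "card B = dim Y" by (rule basis_exists)
  obtain B' where B': "B \<subseteq> B'" "B' \<subseteq> UNIV" "independent B'" "UNIV \<subseteq> span B'"
    by (rule maximal_independent_subset_extend[OF subset_UNIV B(2)])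
  define f where "f = (\<lambda>x::real^'n. if x \<in> B then x else 0)"
  obtain g where g: "linear g" "\<And>x. x \<in> B' \<Longrightarrow> g x = f x"
    using linear_independent_extend[OF B'(3), of f] by blast
  have fY: "f x \<in> Y" for x unfolding f_def using B(1) subspace_0[OF assms] by auto
  have "g ` B' \<subseteq> Y" using g(2) fY by auto
  then have "span (g ` B') \<subseteq> Y" using assms by (simp add: span_minimal)
  moreover have "span (g ` B') = g ` span B'" by (rule linear_span_image[OF g(1)])
  ultimately have r: "g x \<in> Y" for x using B'(4) by blast
  have "g y = y" if "y \<in> Y" for y
  proof -
    have "y \<in> span B" using that B(3) by blast
    moreover have "g b = id b" if "b \<in> B" for b using g(2)[of b] that B'(1) unfolding f_def by auto
    ultimately have "g y = id y" using linear_eq_on[OF g(1) linear_id] by blast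
    then show ?thesis by simp
  qed
  then show ?thesis using g(1) r unfolding is_projection_def by blast
qed




lemma conv_by:
  assumes pn: "polyhedral_norm N" and b: "\<And>j. N (v j - l) \<le> h j" and h: "h \<longlonglongrightarrow> 0"
  shows "v \<longlonglongrightarrow> l"
proof (rule N_tendsto_zero_imp[OF pn])
  show "(\<lambda>j. N (v j - l)) \<longlonglongrightarrow> 0"
  proof (rule tendsto_sandwich[OF _ _ tendsto_const h])
    show "\<forall>\<^sub>F n in sequentially. 0 \<le> N (v n - l)" using N_nonneg[OF pn] by simp
    show "\<forall>\<^sub>F n in sequentially. N (v n - l) \<le> h n" using b by simp
  qed
qed

lemma inv_lim: "(\<lambda>j. c / (real j + 1)) \<longlonglongrightarrow> 0"
proof -
  have "(\<lambda>j. c * inverse (real (Suc j))) \<longlonglongrightarrow> c * 0"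
    by (intro tendsto_mult tendsto_const LIMSEQ_inverse_real_of_nat)
  then show ?thesis by (simp add: divide_inverse add.commute)
qed

lemma lin_expand: "linear (f::real^'n \<Rightarrow> real^'n) \<Longrightarrow> f x = (\<Sum>i\<in>UNIV. x$i *\<^sub>R f (axis i 1))"
proof -
  assume l: "linear f"
  have "x = (\<Sum>i\<in>UNIV. x$i *\<^sub>R axis i 1)" using basis_expansion[of x] by (simp add: scalar_mult_eq_scaleR)
  then have "f x = f (\<Sum>i\<in>UNIV. x$i *\<^sub>R axis i 1)" by simp
  also have "\<dots> = (\<Sum>i\<in>UNIV. f (x$i *\<^sub>R axis i 1))" using l by (simp add: linear_sum)
  also have "\<dots> = (\<Sum>i\<in>UNIV. x$i *\<^sub>R f (axis i 1))" using l by (simp add: linear_scale)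
  finally show ?thesis .
qed




theorem mainTheorem16:
  fixes N :: "real^'n \<Rightarrow> real" and Y :: "(real^'n) set" and k m :: nat
  assumes "polyhedral_norm N"
    and "2 \<le> k" and "k \<le> CARD('n) - 1"
    and "subspace Y" and "dim Y = k"
    and "0 < m"
    and "\<forall>P\<in>min_projections N Y. finite (norming_pairs N P) \<and> card (norming_pairs N P) \<le> m"
  shows "\<exists>r>0. \<forall>Y0. subspace Y0 \<and> dim Y0 = k \<and> subspace_dist N Y Y0 \<le> r \<longrightarrow>
           (\<forall>P\<in>min_projections N Y0. finite (norming_pairs N P) \<and> card (norming_pairs N P) \<le> m)"
proof (rule ccontr)
  assume neg: "\<not> ?thesis"
  note pn = assms(1)
  note sY = assms(4)
  have k0: "dim Y > 0" using assms(2,5) by simp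
  obtain Q0 where Q0: "is_projection Y Q0" using proj_exists[OF sY] by blast
  define q0 where "q0 = op_norm N Q0"
  have lQ0: "linear Q0" using Q0 unfolding is_projection_def by simp
  have q00: "q0 \<ge> 0" unfolding q0_def by (rule op_nonneg[OF pn lQ0])
  define r where "r = (\<lambda>j::nat. 1 / (4 * (1 + q0) * (real j + 1)))"
  have rpos: "r j > 0" for j unfolding r_def using q00 by simp
  define good where "good = (\<lambda>j (p :: (real^'n) set \<times> (real^'n \<Rightarrow> real^'n)).
     subspace (fst p) \<and> dim (fst p) = k \<and> subspace_dist N Y (fst p) \<le> r j \<and>
     snd p \<in> min_projections N (fst p) \<and>
     \<not> (finite (norming_pairs N (snd p)) \<and> card (norming_pairs N (snd p)) \<le> m))"
  have "\<forall>j. \<exists>p. good j p"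
  proof
    fix j
    have "\<not> (\<forall>Y0. subspace Y0 \<and> dim Y0 = k \<and> subspace_dist N Y Y0 \<le> r j \<longrightarrow>
           (\<forall>P\<in>min_projections N Y0. finite (norming_pairs N P) \<and> card (norming_pairs N P) \<le> m))"
      using neg rpos[of j] by blast
    then obtain Y0 P where "subspace Y0 \<and> dim Y0 = k \<and> subspace_dist N Y Y0 \<le> r j"
      "P \<in> min_projections N Y0" "\<not> (finite (norming_pairs N P) \<and> card (norming_pairs N P) \<le> m)"
      by blast
    then have "good j (Y0, P)" unfolding good_def by simp
    then show "\<exists>p. good j p" by blast
  qed
  then obtain f where f: "\<And>j. good j (f j)" using choice by metis
  define Ys where "Ys = (\<lambda>j. fst (f j))"
  define Ps where "Ps = (\<lambda>j. snd (f j))"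
  have sYs: "subspace (Ys j)" and dYs: "dim (Ys j) = k" and distYs: "subspace_dist N Y (Ys j) \<le> r j"
    and mP: "Ps j \<in> min_projections N (Ys j)"
    and bad: "\<not> (finite (norming_pairs N (Ps j)) \<and> card (norming_pairs N (Ps j)) \<le> m)" for j
    using f[of j] unfolding good_def Ys_def Ps_def by auto
  define t where "t = (\<lambda>j. 2 * r j)"
  have t0: "t j \<ge> 0" for j unfolding t_def using rpos[of j] by simp
  have A1: "\<forall>y\<in>Y. \<exists>z\<in>Ys j. N (y - z) \<le> t j * N y"
   and A2: "\<forall>z\<in>Ys j. \<exists>y\<in>Y. N (z - y) \<le> t j * N z" for j
    using approx_both[OF pn sY k0 sYs[of j] _ rpos[of j] distYs[of j]] dYs[of j] k0 assms(5)
    unfolding t_def by auto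
  have pP: "is_projection (Ys j) (Ps j)" and opP: "op_norm N (Ps j) = rel_proj_const N (Ys j)" for j
    using mP[of j] unfolding min_projections_def by auto
  have lP: "linear (Ps j)" for j using pP[of j] unfolding is_projection_def by simp
  have tsmall: "t j * (1 + q0) \<le> 1/2" for j
  proof -
    have h1: "1 + q0 \<noteq> 0" "real j + 1 \<noteq> 0" using q00 by linarith+
    have h2: "0 < 4 + (q0 * 4 + (real j * 4 + q0 * (real j * 4)))"
      using q00 by (smt (verit) mult_nonneg_nonneg of_nat_0_le_iff)
    have "t j * (1 + q0) = 1 / (2 * (real j + 1))" unfolding t_def r_def using h1 h2 by (simp add: field_simps)
    also have "\<dots> \<le> 1/2" by (simp add: field_simps)
    finally show ?thesis .
  qed
  define B where "B = 2 * q0"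
  have opB: "op_norm N (Ps j) \<le> B" for j
  proof -
    have "rel_proj_const N (Ys j) \<le> q0 / (1 - t j * (1 + q0))"
      unfolding q0_def
    proof (rule lam_bound[OF pn Q0 sY sYs])
      show "dim (Ys j) = dim Y" using dYs assms(5) by simp
      show "\<forall>z\<in>Ys j. \<exists>y\<in>Y. N (z - y) \<le> t j * N z" by (rule A2)
      show "0 \<le> t j" by (rule t0)
      show "t j * (1 + op_norm N Q0) < 1" using tsmall[of j] unfolding q0_def by linarith
    qed
    also have "\<dots> \<le> 2 * q0"
    proof -
      have "1 - t j * (1 + q0) \<ge> 1/2" using tsmall[of j] by linarith
      moreover have "(2 * q0) * (1/2) \<le> (2 * q0) * (1 - t j * (1 + q0))"
        using calculation q00 by (intro mult_left_mono) auto
      ultimately show ?thesis by (simp add: pos_divide_le_eq)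
    qed
    finally show ?thesis unfolding B_def opP .
  qed
  have B0: "B \<ge> 0" unfolding B_def using q00 by simp
  have bndP: "N (Ps j x) \<le> B * N x" for j x
  proof -
    have "N (Ps j x) \<le> op_norm N (Ps j) * N x" by (rule op_upper[OF pn lP])
    also have "\<dots> \<le> B * N x" using opB[of j] N_nonneg[OF pn, of x] by (rule mult_right_mono)
    finally show ?thesis .
  qed
  obtain K where K: "K > 0" "\<And>x. norm x \<le> K * N x" using N_lower[OF pn] by blast
  define M where "M = (\<lambda>j. (\<chi> i. Ps j (axis i 1)) :: real^'n^'n)"
  have "bounded (range M)"
  proof -
    have "norm (M j) \<le> (\<Sum>i\<in>UNIV. K * (B * N (axis i (1::real))))" for j
    proof -
      have "norm (M j) = L2_set (\<lambda>i. norm (M j $ i)) UNIV" by (simp add: norm_vec_def)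
      also have "\<dots> \<le> (\<Sum>i\<in>UNIV. norm (M j $ i))" by (rule L2_set_le_sum) simp
      also have "\<dots> \<le> (\<Sum>i\<in>UNIV. K * (B * N (axis i (1::real))))"
      proof (rule sum_mono)
        fix i
        have "norm (M j $ i) = norm (Ps j (axis i 1))" unfolding M_def by simp
        also have "\<dots> \<le> K * N (Ps j (axis i 1))" by (rule K(2))
        also have "\<dots> \<le> K * (B * N (axis i (1::real)))" using K(1) bndP by (intro mult_left_mono) auto
        finally show "norm (M j $ i) \<le> K * (B * N (axis i (1::real)))" .
      qed
      finally show ?thesis .
    qed
    then show ?thesis unfolding bounded_iff by blast
  qed
  then obtain l \<sigma> where \<sigma>: "strict_mono (\<sigma> :: nat \<Rightarrow> nat)" "(M \<circ> \<sigma>) \<longlonglongrightarrow> l"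
    using bounded_imp_convergent_subsequence by blast
  define P where "P = (\<lambda>x::real^'n. \<Sum>i\<in>UNIV. x$i *\<^sub>R l$i)"
  have lPP: "linear P"
  proof (rule linearI)
    fix x y :: "real^'n"
    show "P (x + y) = P x + P y" unfolding P_def by (simp add: scaleR_add_left sum.distrib)
  next
    fix c :: real and x :: "real^'n"
    show "P (c *\<^sub>R x) = c *\<^sub>R P x" unfolding P_def by (simp add: scaleR_sum_right)
  qed
  define Qs where "Qs = (\<lambda>j. Ps (\<sigma> j))"
  define Zs where "Zs = (\<lambda>j. Ys (\<sigma> j))"
  define ts where "ts = (\<lambda>j. t (\<sigma> j))"
  have conv: "(\<lambda>j. Qs j x) \<longlonglongrightarrow> P x" for x
  proof -
    have ci: "(\<lambda>j. Qs j (axis i 1)) \<longlonglongrightarrow> l $ i" for i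
    proof -
      have "(\<lambda>j. (M \<circ> \<sigma>) j $ i) \<longlonglongrightarrow> l $ i" by (rule tendsto_vec_nth[OF \<sigma>(2)])
      then show ?thesis unfolding M_def Qs_def by simp
    qed
    have "(\<lambda>j. \<Sum>i\<in>UNIV. x$i *\<^sub>R Qs j (axis i 1)) \<longlonglongrightarrow> (\<Sum>i\<in>UNIV. x$i *\<^sub>R l$i)"
      by (intro tendsto_sum tendsto_scaleR tendsto_const ci)
    moreover have "Qs j x = (\<Sum>i\<in>UNIV. x$i *\<^sub>R Qs j (axis i 1))" for j
      unfolding Qs_def by (rule lin_expand[OF lP])
    ultimately show ?thesis unfolding P_def by simp
  qed
  have tlim: "t \<longlonglongrightarrow> 0"
  proof -
    have "(\<lambda>j. 2 / (4 * (1 + q0)) / (real j + 1)) \<longlonglongrightarrow> 0" by (rule inv_lim)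
    moreover have "t = (\<lambda>j. 2 / (4 * (1 + q0)) / (real j + 1))" unfolding t_def r_def by (simp add: field_simps)
    ultimately show ?thesis by simp
  qed
  have tslim: "ts \<longlonglongrightarrow> 0" unfolding ts_def using LIMSEQ_subseq_LIMSEQ[OF tlim \<sigma>(1)] by (simp add: o_def)
  have ts0: "ts j \<ge> 0" for j unfolding ts_def by (rule t0)
  have lQs: "linear (Qs j)" for j unfolding Qs_def by (rule lP)
  have pQs: "is_projection (Zs j) (Qs j)" for j unfolding Qs_def Zs_def by (rule pP)
  have sZs: "subspace (Zs j)" for j unfolding Zs_def by (rule sYs)
  have dZs: "dim (Zs j) = dim Y" for j unfolding Zs_def using dYs assms(5) by simp
  have B1: "\<forall>y\<in>Y. \<exists>z\<in>Zs j. N (y - z) \<le> ts j * N y" for j unfolding Zs_def ts_def by (rule A1)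
  have B2: "\<forall>z\<in>Zs j. \<exists>y\<in>Y. N (z - y) \<le> ts j * N z" for j unfolding Zs_def ts_def by (rule A2)
  have bndQ: "N (Qs j x) \<le> B * N x" for j x unfolding Qs_def by (rule bndP)
  have PY: "P x \<in> Y" for x
  proof -
    have "\<forall>j. \<exists>y. y \<in> Y \<and> N (Qs j x - y) \<le> ts j * N (Qs j x)"
    proof
      fix j
      have "Qs j x \<in> Zs j" using pQs[of j] unfolding is_projection_def by blast
      then obtain y where "y \<in> Y" "N (Qs j x - y) \<le> ts j * N (Qs j x)" by (rule bexE[OF bspec[OF B2]])
      then show "\<exists>y. y \<in> Y \<and> N (Qs j x - y) \<le> ts j * N (Qs j x)" by blast
    qed
    then obtain ys where ys: "\<And>j. ys j \<in> Y" "\<And>j. N (Qs j x - ys j) \<le> ts j * N (Qs j x)"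
      using choice by metis
    have "ys \<longlonglongrightarrow> P x"
    proof (rule conv_by[OF pn])
      fix j
      have "N (ys j - P x) \<le> N (ys j - Qs j x) + N (Qs j x - P x)" by (rule N_tri_diff[OF pn])
      also have "N (ys j - Qs j x) = N (Qs j x - ys j)" by (rule N_diff_sym[OF pn])
      also have "\<dots> \<le> ts j * N (Qs j x)" by (rule ys(2))
      also have "\<dots> \<le> ts j * (B * N x)" using bndQ ts0 by (rule mult_left_mono)
      finally show "N (ys j - P x) \<le> ts j * (B * N x) + N (Qs j x - P x)" by simp
    next
      have "(\<lambda>j. N (Qs j x - P x)) \<longlonglongrightarrow> N (P x - P x)"
        by (rule N_tendsto[OF pn]) (intro tendsto_diff conv tendsto_const)
      then have "(\<lambda>j. N (Qs j x - P x)) \<longlonglongrightarrow> 0" using N_zero[OF pn] by simp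
      moreover have "(\<lambda>j. ts j * (B * N x)) \<longlonglongrightarrow> 0 * (B * N x)" by (intro tendsto_mult tslim tendsto_const)
      ultimately show "(\<lambda>j. ts j * (B * N x) + N (Qs j x - P x)) \<longlonglongrightarrow> 0"
        using tendsto_add[of "\<lambda>j. ts j * (B * N x)" 0 sequentially "\<lambda>j. N (Qs j x - P x)" 0] by simp
    qed
    then show ?thesis using closed_sequentially[OF closed_subspace[OF sY]] ys(1) by blast
  qed
  have Pid: "P y = y" if yY: "y \<in> Y" for y
  proof -
    have "\<forall>j. \<exists>z. z \<in> Zs j \<and> N (y - z) \<le> ts j * N y"
    proof
      fix j
      obtain z where "z \<in> Zs j" "N (y - z) \<le> ts j * N y" by (rule bexE[OF bspec[OF B1 yY]])
      then show "\<exists>z. z \<in> Zs j \<and> N (y - z) \<le> ts j * N y" by blast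
    qed
    then obtain zs where zs: "\<And>j. zs j \<in> Zs j" "\<And>j. N (y - zs j) \<le> ts j * N y"
      using choice by metis
    have "(\<lambda>j. Qs j y) \<longlonglongrightarrow> y"
    proof (rule conv_by[OF pn])
      fix j
      have "Qs j (zs j) = zs j" using pQs[of j] zs(1)[of j] unfolding is_projection_def by blast
      then have "Qs j y - y = Qs j (y - zs j) - (y - zs j)" using lQs[of j] by (simp add: linear_diff)
      then have e: "Qs j y - y = Qs j (y - zs j) + (- (y - zs j))" by (simp only: diff_conv_add_uminus)
      have "N (Qs j y - y) \<le> N (Qs j (y - zs j)) + N (- (y - zs j))" unfolding e by (rule N_tri[OF pn])
      then have "N (Qs j y - y) \<le> N (Qs j (y - zs j)) + N (y - zs j)" unfolding N_minus[OF pn] .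
      also have "\<dots> \<le> B * N (y - zs j) + N (y - zs j)" using bndQ by simp
      also have "\<dots> = (B + 1) * N (y - zs j)" by (simp add: algebra_simps)
      also have "\<dots> \<le> (B + 1) * (ts j * N y)" using zs(2) B0 by (intro mult_left_mono) auto
      finally show "N (Qs j y - y) \<le> (B + 1) * (ts j * N y)" .
    next
      have "(\<lambda>j. (B + 1) * (ts j * N y)) \<longlonglongrightarrow> (B + 1) * (0 * N y)" by (intro tendsto_mult tslim tendsto_const)
      then show "(\<lambda>j. (B + 1) * (ts j * N y)) \<longlonglongrightarrow> 0" by simp
    qed
    then show ?thesis using conv[of y] LIMSEQ_unique by blast
  qed
  have projP: "is_projection Y P" unfolding is_projection_def using lPP PY Pid by blast
  have opQs: "op_norm N (Qs j) = rel_proj_const N (Zs j)" for j unfolding Qs_def Zs_def by (rule opP)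
  have Nconv: "(\<lambda>j. N (Qs j x)) \<longlonglongrightarrow> N (P x)" for x by (rule N_tendsto[OF pn conv])
  have "op_norm N P \<le> rel_proj_const N Y"
  proof (rule lam_greatest[OF pn])
    show "\<exists>P. is_projection Y P" using Q0 by blast
  next
    fix Q assume Q: "is_projection Y Q"
    define q where "q = op_norm N Q"
    have lQ: "linear Q" using Q unfolding is_projection_def by simp
    have q0: "q \<ge> 0" unfolding q_def by (rule op_nonneg[OF pn lQ])
    show "op_norm N P \<le> op_norm N Q" unfolding q_def[symmetric]
    proof (rule op_least[OF pn])
      fix x assume xb: "x \<in> unit_ball N"
      have lim2: "(\<lambda>j. q / (1 - ts j * (1 + q))) \<longlonglongrightarrow> q / (1 - 0 * (1 + q))"
        by (intro tendsto_divide tendsto_diff tendsto_mult tendsto_const tslim) simp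
      have "(\<lambda>j. ts j * (1 + q)) \<longlonglongrightarrow> 0 * (1 + q)" by (intro tendsto_mult tendsto_const tslim)
      then have "eventually (\<lambda>j. ts j * (1 + q) < 1) sequentially"
        by (intro order_tendstoD(2)) auto
      then have ev: "eventually (\<lambda>j. N (Qs j x) \<le> q / (1 - ts j * (1 + q))) sequentially"
      proof (rule eventually_mono)
        fix j assume sm: "ts j * (1 + q) < 1"
        have "N (Qs j x) \<le> op_norm N (Qs j)" by (rule op_ball[OF pn lQs xb])
        also have "\<dots> = rel_proj_const N (Zs j)" by (rule opQs)
        also have "\<dots> \<le> q / (1 - ts j * (1 + q))" unfolding q_def
          by (rule lam_bound[OF pn Q sY sZs dZs B2 ts0]) (use sm q_def in simp)
        finally show "N (Qs j x) \<le> q / (1 - ts j * (1 + q))" .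
      qed
      have "N (P x) \<le> q / (1 - 0 * (1 + q))"
        by (rule tendsto_le[OF trivial_limit_sequentially lim2 Nconv ev])
      then show "N (P x) \<le> q" by simp
    qed
  qed
  moreover have "rel_proj_const N Y \<le> op_norm N P" by (rule lam_lower[OF pn projP])
  ultimately have opPeq: "op_norm N P = rel_proj_const N Y" by linarith
  have minP: "P \<in> min_projections N Y" unfolding min_projections_def using projP opPeq by blast
  have hypP: "finite (norming_pairs N P)" "card (norming_pairs N P) \<le> m" using assms(7) minP by auto
  define EF where "EF = {x. x extreme_point_of unit_ball N} \<times> {u. u extreme_point_of dual_unit_ball N}"
  have fEF: "finite EF" unfolding EF_def using E_finite[OF pn] F_finite[OF pn] by simp
  have NPsub: "norming_pairs N Q \<subseteq> EF" for Q unfolding EF_def by (rule NP_sub[OF pn])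
  have "\<forall>p\<in>EF - norming_pairs N P. eventually (\<lambda>j. p \<notin> norming_pairs N (Qs j)) sequentially"
  proof
    fix p assume p: "p \<in> EF - norming_pairs N P"
    obtain x u where xu: "p = (x, u)" by (cases p)
    have xe: "x extreme_point_of unit_ball N" and ue: "u extreme_point_of dual_unit_ball N"
      using p xu unfolding EF_def by auto
    have xb: "x \<in> unit_ball N" using xe unfolding extreme_point_of_def by simp
    have ud: "u \<in> dual_unit_ball N" using ue unfolding extreme_point_of_def by simp
    have ne: "u \<bullet> P x \<noteq> op_norm N P" using p xu xe ue unfolding norming_pairs_def by auto
    have "u \<bullet> P x \<le> N (P x)" by (rule dual_le[OF pn ud])
    also have "\<dots> \<le> op_norm N P" by (rule op_ball[OF pn lPP xb])
    finally have lt: "u \<bullet> P x < op_norm N P" using ne by linarith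
    define c where "c = (u \<bullet> P x + op_norm N P) / 2"
    have c1: "u \<bullet> P x < c" "c < op_norm N P" using lt unfolding c_def by auto
    obtain x0 where x0: "x0 \<in> unit_ball N" "c < N (P x0)" using op_exists[OF pn lPP c1(2)] by blast
    have ev1: "eventually (\<lambda>j. c < N (Qs j x0)) sequentially"
      by (rule order_tendstoD(1)[OF Nconv x0(2)])
    have "(\<lambda>j. u \<bullet> Qs j x) \<longlonglongrightarrow> u \<bullet> P x" by (intro tendsto_inner tendsto_const conv)
    then have ev2: "eventually (\<lambda>j. u \<bullet> Qs j x < c) sequentially"
      by (rule order_tendstoD(2)) (rule c1(1))
    have "eventually (\<lambda>j. c < N (Qs j x0) \<and> u \<bullet> Qs j x < c) sequentially"
      using ev1 ev2 by (rule eventually_conj)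
    then show "eventually (\<lambda>j. p \<notin> norming_pairs N (Qs j)) sequentially"
    proof (rule eventually_mono)
      fix j assume h: "c < N (Qs j x0) \<and> u \<bullet> Qs j x < c"
      have "N (Qs j x0) \<le> op_norm N (Qs j)" by (rule op_ball[OF pn lQs x0(1)])
      then have "u \<bullet> Qs j x \<noteq> op_norm N (Qs j)" using h by linarith
      then show "p \<notin> norming_pairs N (Qs j)" unfolding xu norming_pairs_def by simp
    qed
  qed
  then have "eventually (\<lambda>j. \<forall>p\<in>EF - norming_pairs N P. p \<notin> norming_pairs N (Qs j)) sequentially"
    using fEF by (intro eventually_ball_finite) auto
  then obtain j0 where j0: "\<forall>p\<in>EF - norming_pairs N P. p \<notin> norming_pairs N (Qs j0)"
    unfolding eventually_sequentially by blast
  have sub: "norming_pairs N (Qs j0) \<subseteq> norming_pairs N P" using j0 NPsub[of "Qs j0"] by blast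
  have "finite (norming_pairs N (Qs j0))" using finite_subset[OF sub hypP(1)] .
  moreover have "card (norming_pairs N (Qs j0)) \<le> m" using card_mono[OF hypP(1) sub] hypP(2) by linarith
  ultimately show False using bad[of "\<sigma> j0"] unfolding Qs_def by blast
qed


end
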